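(* Let $n$ be a positive integer, $q=3^n$, $m=2n$, and let $f(x)=x^d$ with $d=(3^k+1)/2$, where $\gcd(k,2n)=1$, be the Coulter–Matthews planar function on $\mathbb F_{3^m}=\mathbb F_{q^2}$. Let $\mathcal U:=\{(x,y):y+y^q=f(x+x^q)\}\cup\{(\infty)\}$ (the unital of the unitary polarity of $\Pi(f)$ given by $(x,y)\mapsto L_{x^q,y^q}$, $(a)\mapsto N_{a^q}$, $(\infty)\mapsto L_\infty$), and let $\mathcal U_\theta:=\{(x,t\theta):x\in\mathbb F_{q^2},t\in\mathbb F_q\}\cup\{(\infty)\}$ with $\theta\in\mathbb F_{q^2}^*$ such that $\theta^{q+1}$ is a nonsquare in $\mathbb F_q$. Then the subgroups of the shift group $T$ of $\Pi(f)$ fixing $\mathcal U$ and fixing $\mathcal U_\theta$ have orders $3^{2n}$ and $3^{3n}$ respectively. Consequently $\mathcal U$ and $\mathcal U_\theta$ are inequivalent, i.e.\ no collineation of $\Pi(f)$ maps one onto the other.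
   Context: $\Pi(f)$ is the projective plane with points $(x,y)\in\mathbb F_{q^2}^2$ and $(a)$ for $a\in\mathbb F_{q^2}\cup\{\infty\}$, lines $L_{a,b}=\{(x,f(x+a)-b):x\in\mathbb F_{q^2}\}\cup\{(a)\}$, $N_a=\{(a,y):y\in\mathbb F_{q^2}\}\cup\{(\infty)\}$ ($a,b\in\mathbb F_{q^2}$), $L_\infty=\{(a):a\in\mathbb F_{q^2}\cup\{\infty\}\}$. The shift group $T$ consists of the collineations $\tau_{u,v}$ induced by $(x,y)\mapsto(x+u,y+v)$, $u,v\in\mathbb F_{q^2}$. A collineation is a bijection of points mapping lines onto lines. *)

theory Defs
  imports Main
begin

text \<open>Points of Pi(f): affine points (x,y) and points at infinity (a),
  where (Inf (Some a)) is (a) for a in the field and (Inf None) is (infinity).\<close>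
datatype 'a pt = Aff 'a 'a | Inf "'a option"

datatype 'a ln = L 'a 'a | N 'a | Linf

fun line_pts :: "('a::field \<Rightarrow> 'a) \<Rightarrow> 'a ln \<Rightarrow> 'a pt set" where
  "line_pts f (L a b) = {Aff x (f (x + a) - b) | x. True} \<union> {Inf (Some a)}"
| "line_pts f (N a) = {Aff a y | y. True} \<union> {Inf None}"
| "line_pts f Linf = range Inf"

definition collineation :: "('a::field \<Rightarrow> 'a) \<Rightarrow> ('a pt \<Rightarrow> 'a pt) \<Rightarrow> bool" where
  "collineation f g \<longleftrightarrow> bij g \<and> (\<forall>l. \<exists>l'. g ` line_pts f l = line_pts f l')"

text \<open>The shift tau_{u,v}: the collineation induced by (x,y) -> (x+u,y+v);
  it maps L_{a,b} to L_{a-u,b-v}, hence (a) to (a-u), and fixes (infinity).\<close>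
fun shift :: "'a::field \<Rightarrow> 'a \<Rightarrow> 'a pt \<Rightarrow> 'a pt" where
  "shift u v (Aff x y) = Aff (x + u) (y + v)"
| "shift u v (Inf (Some a)) = Inf (Some (a - u))"
| "shift u v (Inf None) = Inf None"

definition shift_group :: "('a::field pt \<Rightarrow> 'a pt) set" where
  "shift_group = {shift u v | u v. True}"

definition cm_fun :: "nat \<Rightarrow> 'a::field \<Rightarrow> 'a" where
  "cm_fun k x = x ^ ((3 ^ k + 1) div 2)"

definition unital_U :: "nat \<Rightarrow> nat \<Rightarrow> 'a::field pt set" where
  "unital_U n k = {Aff x y | x y. y + y ^ (3 ^ n) = cm_fun k (x + x ^ (3 ^ n))} \<union> {Inf None}"

definition unital_Utheta :: "nat \<Rightarrow> 'a::field \<Rightarrow> 'a pt set" where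
  "unital_Utheta n \<theta> = {Aff x (t * \<theta>) | x t. t ^ (3 ^ n) = t} \<union> {Inf None}"

end

theory Submission
  imports Defs "HOL-Number_Theory.Residues" "HOL-Computational_Algebra.Polynomial"
begin



lemma prime3: "prime (3::nat)"
proof -
  have "False" if "2 \<le> n" "n < 3" "n dvd 3" for n :: nat
  proof -
    have "n = 2" using that by simp
    with that(3) show False by simp
  qed
  then show ?thesis by (auto simp: prime_nat_iff')
qed

lemma char3_from_card:
  assumes "card (UNIV::'a::{field,finite} set) = 3^m" "m > 0"
  shows "CHAR('a) = 3"
proof -
  have pos: "CHAR('a) > 0" by (rule finite_imp_CHAR_pos) simp
  have pr: "prime CHAR('a)" using prime_CHAR_semidom[OF pos] .
  have "CHAR('a) dvd 3^m" using CHAR_dvd_CARD[where 'a='a] assms by simp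
  hence "CHAR('a) dvd 3" using pr prime_dvd_power_nat by blast
  moreover have "prime (3::nat)" by (rule prime3)
  ultimately show ?thesis using pr primes_dvd_imp_eq by blast
qed

lemma three_zero: assumes "CHAR('a::field) = 3" shows "(3::'a) = 0"
  using of_nat_CHAR[where 'a='a] assms by simp

lemma frob_add: assumes "CHAR('a::field) = 3" shows "(x + y :: 'a)^(3^j) = x^(3^j) + y^(3^j)"
proof -
  have "prime (3::nat)" by (rule prime3)
  thus ?thesis using freshmans_dream'[of "3^j" j x y] assms by simp
qed

lemma frob_neg: "((-x)::'a::ring_1)^(3^j) = - (x^(3^j))"
  by (simp add: power_minus_odd)

lemma frob_diff: assumes "CHAR('a::field) = 3" shows "(x - y :: 'a)^(3^j) = x^(3^j) - y^(3^j)"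
  using frob_add[OF assms, of x "-y" j] by (simp add: frob_neg)

lemma pow_card_same:
  fixes x :: "'a::{field,finite}"
  shows "x ^ card (UNIV :: 'a set) = x"
proof (cases "x = 0")
  case False
  have "x * (\<Prod>y\<in>UNIV-{0}. x * y) = x * x ^ (card (UNIV :: 'a set) - 1) * \<Prod>(UNIV-{0})"
    by (simp add: prod.distrib mult_ac)
  also have "x * x ^ (card (UNIV :: 'a set) - 1) = x ^ Suc (card (UNIV :: 'a set) - 1)"
    by (subst power_Suc) auto
  also have "Suc (card (UNIV :: 'a set) - 1) = card (UNIV :: 'a set)"
    using finite_UNIV_card_ge_0[where ?'a = 'a] by simp
  also have "(\<Prod>y\<in>UNIV-{0}. x * y) = (\<Prod>y\<in>UNIV-{0}. y)"
    by (rule prod.reindex_bij_witness[of _ "\<lambda>y. y / x" "\<lambda>y. x * y"]) (use False in auto)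
  finally show ?thesis
    by simp
qed (use finite_UNIV_card_ge_0[where ?'a = 'a] in auto)

lemma nonsq:
  fixes w t \<theta> :: "'a::field"
  assumes fx: "\<And>x::'a. x^(3^n*3^n) = x"
    and hyp: "\<not>(\<exists>s::'a. s^(3^n) = s \<and> s^2 = \<theta>^(3^n+1))"
    and wt: "w^2 = t*\<theta>" and tq: "t^(3^n) = t"
  shows "w = 0"
proof (rule ccontr)
  assume w: "w \<noteq> 0"
  define q where "q = (3::nat)^n"
  have fq: "\<And>x::'a. (x^q)^q = x" using fx by (simp add: q_def flip: power_mult)
  have t: "t \<noteq> 0" using w wt by auto
  define s where "s = w^(q+1)/t"
  have "s^q = (w^q)^q * w^q / t^q" by (simp add: s_def power_divide power_mult_distrib mult.commute)
  also have "\<dots> = s" using fq tq by (simp add: s_def q_def power_add)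
  finally have 1: "s^q = s" .
  have "s^2 = (w^2)^(q+1) / t^2" by (simp add: s_def power_divide power_mult_distrib flip: power_mult) (metis power_mult mult.commute)
  also have "\<dots> = t^q * t * \<theta>^(q+1) / t^2" using wt by (simp add: power_mult_distrib power_add)
  also have "\<dots> = \<theta>^(q+1)" using tq t by (simp add: q_def power2_eq_square)
  finally have 2: "s^2 = \<theta>^(q+1)" .
  from 1 2 hyp show False by (auto simp: q_def)
qed




lemma k_odd: assumes "gcd k (2*n) = 1" "n > 0" shows "odd (k::nat)"
proof
  assume "even k"
  then have "2 dvd gcd k (2*n)" by simp
  with assms show False by simp
qed

lemma coprime_kn: assumes "gcd k (2*n) = 1" shows "gcd k n = (1::nat)"
  by (metis assms coprime_iff_gcd_eq_1 coprime_mult_right_iff)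

lemma e_props:
  assumes "odd (k::nat)"
  shows "4 * (((3::nat)^k+1) div 4) = 3^k+1" "odd (((3::nat)^k+1) div 4)" "((3::nat)^k+1) div 2 = 2*((3^k+1) div 4)"
proof -
  obtain j where kj: "k = 2*j+1" using assms oddE by blast
  have "(9::nat)^j mod 8 = ((9 mod 8)^j) mod 8" by (rule power_mod[symmetric])
  hence "(9::nat)^j mod 8 = 1" by simp
  then obtain m where m: "(9::nat)^j = 8*m+1" by (metis div_mult_mod_eq add.commute mult.commute)
  have "(3::nat)^k = 3 * 9^j" by (simp add: kj power_mult power_add)
  hence h: "(3::nat)^k + 1 = 4*(6*m+1)" using m by simp
  show "4 * (((3::nat)^k+1) div 4) = 3^k+1" "odd (((3::nat)^k+1) div 4)" "((3::nat)^k+1) div 2 = 2*((3^k+1) div 4)"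
    unfolding h by simp_all
qed

lemma root_unity_e:
  fixes x :: "'a::field"
  assumes fx: "\<And>y::'a. y^(3^(2*n)) = y" and kodd: "odd k" and cop: "gcd k n = 1"
    and ex: "x^((3^k+1) div 4) = 1"
  shows "x = 1"
proof -
  define e where "e = ((3::nat)^k+1) div 4"
  have e4: "4*e = 3^k+1" and eodd: "odd e" using e_props[OF kodd] by (simp_all add: e_def)
  have "e > 0" using eodd by (metis odd_pos)
  hence x0: "x \<noteq> 0" using ex by (auto simp: e_def zero_power)
  define P where "P j \<longleftrightarrow> x^(3^j) = x" for j :: nat
  have Padd: "P (a+b)" if "P a" "P b" for a b
    using that by (simp add: P_def power_add power_mult)
  have Pmult: "P (a*m)" if "P a" for a m
  proof (induction m)
    case 0 then show ?case by (simp add: P_def)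
  next
    case (Suc m)
    have "a * Suc m = a*m + a" by simp
    then show ?case using Padd[OF Suc that] by (simp add: add.commute)
  qed
  have "x^(3^k) * x = 1"
  proof -
    have "x^(3^k) * x = x^(4*e)" by (simp add: e4)
    also have "\<dots> = (x^e)^4" by (simp add: power_mult mult.commute)
    finally show ?thesis using ex by (simp add: e_def)
  qed
  hence inv: "x^(3^k) = inverse x" using x0 by (simp add: field_simps)
  have P2k: "P (2*k)"
  proof -
    have "(3::nat)^(2*k) = 3^k * 3^k" by (simp add: mult_2 power_add)
    hence "x^(3^(2*k)) = (x^(3^k))^(3^k)" by (simp add: power_mult)
    also have "\<dots> = x" by (simp add: inv power_inverse)
    finally show ?thesis by (simp add: P_def)
  qed
  have P2n: "P (2*n)" using fx by (simp add: P_def)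
  have "2*k \<noteq> 0" using kodd by (metis mult_eq_0_iff odd_pos zero_neq_numeral less_irrefl)
  then obtain u v where uv: "2*k*u = 2*n*v + gcd (2*k) (2*n)" using bezout_nat by blast
  have "gcd (2*k) (2*n) = 2" using cop by (simp add: gcd_mult_distrib_nat[symmetric])
  hence uv2: "2*k*u = 2*n*v + 2" using uv by simp
  have "P (2*n*v + 2)" using Pmult[OF P2k, of u] uv2 by simp
  moreover have "P (2*n*v)" using Pmult[OF P2n] .
  moreover have "x^(3^(2*n*v+2)) = (x^(3^(2*n*v)))^9" by (simp add: power_add power_mult) (metis power_mult mult.commute)
  ultimately have P2: "P 2" by (simp add: P_def)
  obtain j where kj: "k = 2*j+1" using kodd oddE by blast
  have "P (2*j)" using Pmult[OF P2] .
  hence "x^(3^k) = x^3" by (simp add: P_def kj power_add power_mult) (metis power_mult mult.commute)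
  moreover have "x^4 = x^3 * x" by (simp add: power_Suc2[symmetric])
  ultimately have x4: "x^4 = 1" using \<open>x^(3^k) * x = 1\<close> by simp
  have "x^e = x^(4*(e div 4) + e mod 4)" by simp
  also have "\<dots> = (x^4)^(e div 4) * x^(e mod 4)" by (simp only: power_add power_mult)
  finally have "x^e = (x^4)^(e div 4) * x^(e mod 4)" .
  hence xe: "x^(e mod 4) = 1" using x4 ex by (simp add: e_def)
  have "e mod 4 = 1 \<or> e mod 4 = 3" using eodd by presburger
  then show ?thesis
  proof
    assume "e mod 4 = 1" then show ?thesis using xe by simp
  next
    assume "e mod 4 = 3"
    hence "x^3 = 1" using xe by simp
    moreover have "x^4 = x^3 * x" by (simp add: power_Suc2[symmetric])
    ultimately have "x^4 = x" by simp
    thus ?thesis using x4 by simp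
  qed
qed

lemma pow_e_inj:
  fixes x y :: "'a::field"
  assumes fx: "\<And>y::'a. y^(3^(2*n)) = y" and kodd: "odd k" and cop: "gcd k n = 1"
    and ex: "x^((3^k+1) div 4) = y^((3^k+1) div 4)"
  shows "x = y"
proof (cases "y = 0")
  case True
  have "((3::nat)^k+1) div 4 > (0::nat)" using e_props(2)[OF kodd] by (metis odd_pos)
  then have "(0::'a)^(((3::nat)^k+1) div 4) = 0" by (simp add: zero_power)
  then show ?thesis using ex True by (metis power_eq_0_iff)
next
  case False
  have "(x/y)^((3^k+1) div 4) = 1" using ex False by (simp add: power_divide)
  hence "x/y = 1" by (rule root_unity_e[OF fx kodd cop])
  thus ?thesis using False by simp
qed

lemma cm_sq: assumes "odd k" shows "cm_fun k x = (x^((3^k+1) div 4))^2"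
proof -
  have "((3::nat)^k+1) div 2 = 2*((3^k+1) div 4)" using e_props(3)[OF assms] .
  then show ?thesis unfolding cm_fun_def by (metis power_mult mult.commute)
qed




lemma eq3I: assumes "(3::'a::comm_ring_1) = 0" "a - b = 3 * z" shows "a = (b::'a)"
  using assms by simp

lemma two_ne0: assumes "(3::'a::field) = 0" shows "(2::'a) \<noteq> 0"
proof
  assume "(2::'a) = 0"
  hence "(3::'a) = 1" by (metis add_0 one_plus_numeral_commute numeral_Bit1 numeral_One one_add_one semiring_norm(5) numeral_plus_one)
  with assms show False by simp
qed

locale cmset =
  fixes n k :: nat and \<theta> :: "'a::{field,finite}"
  assumes char3: "CHAR('a) = 3"
    and fx: "\<And>x::'a. x^(3^(2*n)) = x"
    and cardU: "card (UNIV::'a set) = 3^(2*n)"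
    and npos: "n > 0"
    and kodd: "odd k" and cop: "gcd k n = 1"
    and th0: "\<theta> \<noteq> 0"
    and hyp: "\<not> (\<exists>s::'a. s^(3^n) = s \<and> s^2 = \<theta>^(3^n+1))"
begin

abbreviation q :: nat where "q \<equiv> 3^n"
abbreviation f :: "'a \<Rightarrow> 'a" where "f \<equiv> cm_fun k"
definition Tr :: "'a \<Rightarrow> 'a" where "Tr x = x + x^q"
abbreviation e :: nat where "e \<equiv> (3^k+1) div 4"

lemma t3: "(3::'a) = 0" using three_zero[OF char3] .
lemma t2: "(2::'a) \<noteq> 0" using two_ne0[OF t3] .

lemma fxx: "\<And>x::'a. x^(3^n*3^n) = x" using fx by (simp add: power_add[symmetric] mult_2)
lemma fq: "((x::'a)^q)^q = x" using fxx by (simp add: power_mult[symmetric])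

lemma fadd: "((x::'a)+y)^q = x^q + y^q" using frob_add[OF char3] .
lemma fneg: "(-(x::'a))^q = - (x^q)" using frob_neg .
lemma fdiff: "((x::'a)-y)^q = x^q - y^q" using frob_diff[OF char3] .
lemma fmul: "((x::'a)*y)^q = x^q * y^q" by (simp add: power_mult_distrib)

lemma q_gt1: "q > 1" by (rule one_less_power) (use npos in auto)

lemma Tr_add: "Tr (x+y) = Tr x + Tr y" by (simp add: Tr_def fadd)
lemma Tr_neg: "Tr (-x) = - Tr x" by (simp add: Tr_def fneg)
lemma Tr_diff: "Tr (x-y) = Tr x - Tr y" by (simp add: Tr_def fdiff)
lemma Tr_q: "(Tr x)^q = Tr x" by (simp add: Tr_def fadd fq)
lemma Tr0: "Tr 0 = 0" using q_gt1 by (simp add: Tr_def)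

lemma f_sq: "f x = (x^e)^2" using cm_sq[OF kodd] .
lemma e_pos: "e > 0" using e_props(2)[OF kodd] by (metis odd_pos)
lemma e_odd: "odd e" using e_props(2)[OF kodd] .
lemma f0: "f 0 = 0" using e_pos by (simp add: f_sq zero_power)
lemma f_eq0: "f x = 0 \<longleftrightarrow> x = 0" using e_pos by (simp add: f_sq)
lemma f_neg: "f (-x) = f x" using e_odd by (simp add: f_sq power_minus_odd)
lemma f_frob: "f (x^q) = (f x)^q"
proof -
  have "(x^q)^((3^k+1) div 2) = x^(q*((3^k+1) div 2))" by (rule power_mult[symmetric])
  also have "\<dots> = x^(((3^k+1) div 2)*q)" by (simp only: mult.commute)
  also have "\<dots> = (x^((3^k+1) div 2))^q" by (rule power_mult)
  finally show ?thesis unfolding cm_fun_def .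
qed
lemma pe_inj: "(x::'a)^e = y^e \<Longrightarrow> x = y" by (rule pow_e_inj[OF fx kodd cop])
lemma f_pm: assumes "f x = f y" shows "x = y \<or> x = - y"
proof -
  have "(x^e)^2 = (y^e)^2" using assms by (simp add: f_sq)
  hence "x^e = y^e \<or> x^e = - (y^e)" by (simp add: power2_eq_iff)
  thus ?thesis
  proof
    assume "x^e = y^e" thus ?thesis using pe_inj by blast
  next
    assume "x^e = - (y^e)"
    hence "x^e = (-y)^e" using e_odd by (simp add: power_minus_odd)
    thus ?thesis using pe_inj by blast
  qed
qed

lemma pe_surj: "\<exists>a::'a. a^e = y"
proof -
  have "inj (\<lambda>x::'a. x^e)" using pe_inj by (auto intro: injI)
  hence "surj (\<lambda>x::'a. x^e)" by (simp add: finite_UNIV_inj_surj)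
  thus ?thesis using surjD[of "\<lambda>x::'a. x^e" y] by auto
qed

lemma sq_notin: "w^2 = t*\<theta> \<Longrightarrow> t^q = t \<Longrightarrow> w = 0"
  using nonsq[OF fxx hyp, of w t] by simp

lemma f_notin: "f z = t*\<theta> \<Longrightarrow> t^q = t \<Longrightarrow> z = 0"
  using sq_notin[of "z^e" t] by (simp add: f_sq)

lemma th_notS: "\<theta>^q \<noteq> \<theta>"
proof
  assume "\<theta>^q = \<theta>"
  hence "\<theta>^2 = \<theta>^(q+1)" by (simp add: power2_eq_square)
  hence "\<exists>s::'a. s^q = s \<and> s^2 = \<theta>^(q+1)" using \<open>\<theta>^q = \<theta>\<close> by blast
  with hyp show False by (rule notE)
qed

end



lemma img_eqI:
  assumes "\<forall>p\<in>A. s p \<in> A" "\<forall>p\<in>A. s' p \<in> A" "\<forall>p. s (s' p) = p"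
  shows "s ` A = A"
proof
  show "s ` A \<subseteq> A" using assms(1) by auto
  show "A \<subseteq> s ` A"
  proof
    fix p assume "p \<in> A"
    hence "s' p \<in> A" using assms(2) by auto
    thus "p \<in> s ` A" using assms(3) by (metis image_eqI)
  qed
qed

lemma shift_inv: "shift u v (shift (-u) (-v) p) = (p::'a::field pt)"
proof (cases p)
  case (Aff x y) then show ?thesis by simp
next
  case (Inf c) then show ?thesis by (cases c) auto
qed

lemma sg_eq: "{g \<in> shift_group. P g} = (\<lambda>(u,v). shift u v) ` {(u,v). P (shift u v)}"
  by (auto simp: shift_group_def)

context cmset begin

lemma memU_Aff: "Aff x y \<in> (unital_U n k :: 'a pt set) \<longleftrightarrow> Tr y = f (Tr x)"
  by (auto simp: unital_U_def Tr_def)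
lemma memU_Inf: "Inf a \<in> (unital_U n k :: 'a pt set) \<longleftrightarrow> a = None"
  by (auto simp: unital_U_def)
lemma memUt_Aff: "Aff x y \<in> unital_Utheta n \<theta> \<longleftrightarrow> (\<exists>t. t^q = t \<and> y = t*\<theta>)"
  by (auto simp: unital_Utheta_def)
lemma memUt_Inf: "Inf a \<in> unital_Utheta n \<theta> \<longleftrightarrow> a = None"
  by (auto simp: unital_Utheta_def)

lemma stabU: "shift u v ` (unital_U n k :: 'a pt set) = unital_U n k \<longleftrightarrow> Tr u = 0 \<and> Tr v = 0"
proof
  assume h: "shift u v ` (unital_U n k :: 'a pt set) = unital_U n k"
  have inU: "shift u v p \<in> unital_U n k" if "p \<in> unital_U n k" for p
    using h that by (metis imageI)
  have "Aff 0 0 \<in> (unital_U n k :: 'a pt set)" by (simp add: memU_Aff Tr0 f0)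
  from inU[OF this] have 1: "Tr v = f (Tr u)" by (simp add: memU_Aff)
  have "Aff (-u) v \<in> (unital_U n k :: 'a pt set)" using 1 by (simp add: memU_Aff Tr_neg f_neg)
  from inU[OF this] have "Aff (-u+u) (v+v) \<in> (unital_U n k :: 'a pt set)" by simp
  hence "Tr (v+v) = f (Tr 0)" by (simp only: memU_Aff) simp
  hence "Tr v + Tr v = 0" by (simp only: Tr_add Tr0 f0)
  hence "2 * Tr v = 0" by (simp only: mult_2)
  hence v: "Tr v = 0" using t2 by simp
  hence "Tr u = 0" using 1 f_eq0 by simp
  with v show "Tr u = 0 \<and> Tr v = 0" by simp
next
  assume h: "Tr u = 0 \<and> Tr v = 0"
  have gen: "shift a b p \<in> unital_U n k" if "Tr a = 0" "Tr b = 0" "p \<in> unital_U n k" for a b p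
  proof (cases p)
    case (Aff x y) then show ?thesis using that by (simp add: memU_Aff Tr_add)
  next
    case (Inf c) then show ?thesis using that by (simp add: memU_Inf)
  qed
  have h2: "Tr (-u) = 0" "Tr (-v) = 0" using h by (simp_all add: Tr_neg)
  show "shift u v ` (unital_U n k :: 'a pt set) = unital_U n k"
  proof (rule img_eqI[where s'="shift (-u) (-v)"])
    show "\<forall>p\<in>unital_U n k. shift u v p \<in> (unital_U n k :: 'a pt set)" using gen h by blast
    show "\<forall>p\<in>unital_U n k. shift (-u) (-v) p \<in> (unital_U n k :: 'a pt set)" using gen h2 by blast
    show "\<forall>p. shift u v (shift (- u) (- v) p) = p" using shift_inv by blast
  qed
qed

lemma stabUt: "shift u v ` unital_Utheta n \<theta> = unital_Utheta n \<theta> \<longleftrightarrow> (\<exists>t. t^q = t \<and> v = t*\<theta>)"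
proof
  assume h: "shift u v ` unital_Utheta n \<theta> = unital_Utheta n \<theta>"
  have "Aff 0 0 \<in> unital_Utheta n \<theta>" using q_gt1 by (auto simp: memUt_Aff intro!: exI[of _ 0])
  hence "shift u v (Aff 0 0) \<in> unital_Utheta n \<theta>" using h by blast
  thus "\<exists>t. t^q = t \<and> v = t*\<theta>" by (simp add: memUt_Aff)
next
  assume "\<exists>t. t^q = t \<and> v = t*\<theta>"
  then obtain t0 where t0: "t0^q = t0" "v = t0*\<theta>" by blast
  have gen: "shift a b p \<in> unital_Utheta n \<theta>" if sq: "s^q = s" and bs: "b = s*\<theta>" and pU: "p \<in> unital_Utheta n \<theta>" for a b p s
  proof (cases p)
    case (Aff x y)
    then obtain t where "t^q = t" "y = t*\<theta>" using pU by (auto simp: memUt_Aff)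
    then have "(t+s)^q = t+s \<and> y + b = (t+s)*\<theta>" using sq bs by (simp add: fadd algebra_simps)
    then show ?thesis using Aff by (auto simp: memUt_Aff)
  next
    case (Inf c) then show ?thesis using pU by (simp add: memUt_Inf)
  qed
  have t0': "(-t0)^q = -t0" "-v = (-t0)*\<theta>" using t0 by (simp_all add: fneg)
  show "shift u v ` unital_Utheta n \<theta> = unital_Utheta n \<theta>"
  proof (rule img_eqI[where s'="shift (-u) (-v)"])
    show "\<forall>p\<in>unital_Utheta n \<theta>. shift u v p \<in> unital_Utheta n \<theta>" using gen[OF t0] by blast
    show "\<forall>p\<in>unital_Utheta n \<theta>. shift (-u) (-v) p \<in> unital_Utheta n \<theta>" using gen[OF t0'] by blast
    show "\<forall>p. shift u v (shift (- u) (- v) p) = p" using shift_inv by blast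
  qed
qed

definition S :: "'a set" where "S = {x. x^q = x}"
definition K :: "'a set" where "K = {x. Tr x = 0}"

lemma card_S_le: "card S \<le> q"
proof -
  define p :: "'a poly" where "p = monom 1 q + [:0,-1:]"
  have dg: "degree p = q" unfolding p_def using q_gt1
    by (subst degree_add_eq_left) (auto simp: degree_monom_eq)
  hence "p \<noteq> 0" using q_gt1 by auto
  moreover have "S = {x. poly p x = 0}" by (auto simp: S_def p_def poly_monom)
  ultimately show ?thesis using card_poly_roots_bound[of p] dg by simp
qed

lemma card_K_le: "card K \<le> q"
proof -
  define p :: "'a poly" where "p = monom 1 q + [:0,1:]"
  have dg: "degree p = q" unfolding p_def using q_gt1
    by (subst degree_add_eq_left) (auto simp: degree_monom_eq)
  hence "p \<noteq> 0" using q_gt1 by auto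
  moreover have "K = {x. poly p x = 0}" by (auto simp: K_def p_def poly_monom Tr_def add.commute)
  ultimately show ?thesis using card_poly_roots_bound[of p] dg by simp
qed

lemma card_lower: "card (UNIV::'a set) \<le> card S * card K"
proof -
  have U: "(UNIV::'a set) = (\<Union>s\<in>range Tr. {x. Tr x = s})" by auto
  have "card (UNIV::'a set) \<le> (\<Sum>s\<in>range Tr. card {x. Tr x = s})"
    by (subst U) (rule card_UN_le, simp)
  also have "\<dots> \<le> card (range Tr) * card K"
  proof (rule sum_bounded_above[where K="card K", simplified])
    fix s assume "s \<in> range Tr"
    then obtain x0 where s: "s = Tr x0" by blast
    have "{x. Tr x = s} \<subseteq> (\<lambda>w. x0 + w) ` K"
    proof
      fix x assume "x \<in> {x. Tr x = s}"
      hence "Tr (x - x0) = 0" using s by (simp add: Tr_diff)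
      hence "x - x0 \<in> K" by (simp add: K_def)
      thus "x \<in> (\<lambda>w. x0 + w) ` K" by (rule rev_image_eqI) simp
    qed
    hence "card {x. Tr x = s} \<le> card ((\<lambda>w. x0 + w) ` K)" by (rule card_mono[rotated]) simp
    also have "\<dots> \<le> card K" by (rule card_image_le) simp
    finally show "card {x. Tr x = s} \<le> card K" .
  qed
  also have "card (range Tr) \<le> card S"
    by (rule card_mono) (auto simp: S_def Tr_q)
  hence "card (range Tr) * card K \<le> card S * card K" by simp
  finally show ?thesis .
qed

lemma card_SK: "card S = q" "card K = q"
proof -
  have a: "q * q \<le> card S * card K" using card_lower cardU by (simp add: power_add[symmetric] mult_2)
  have b: "card S \<le> q" "card K \<le> q" using card_S_le card_K_le .
  have qp: "q > 0" by simp
  show "card S = q"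
  proof (rule ccontr)
    assume "card S \<noteq> q"
    hence "card S < q" using b by simp
    have "card S * card K \<le> card S * q" by (rule mult_le_mono2) (rule b(2))
    also have "\<dots> < q * q" by (rule mult_less_mono1) (use \<open>card S < q\<close> qp in auto)
    finally have "card S * card K < q * q" .
    thus False using a by simp
  qed
  show "card K = q"
  proof (rule ccontr)
    assume "card K \<noteq> q"
    hence "card K < q" using b by simp
    have "card S * card K \<le> q * card K" by (rule mult_le_mono1) (rule b(1))
    also have "\<dots> < q * q" by (rule mult_less_mono2) (use \<open>card K < q\<close> qp in auto)
    finally have "card S * card K < q * q" .
    thus False using a by simp
  qed
qed

lemma shift_inj: "inj_on (\<lambda>(u,v). shift u v :: 'a pt \<Rightarrow> 'a pt) X"
proof (rule inj_onI, clarify)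
  fix u v u' v' :: 'a
  assume "shift u v = shift u' v'"
  hence "shift u v (Aff 0 0) = shift u' v' (Aff 0 0)" by simp
  thus "u = u' \<and> v = v'" by simp
qed

lemma part1: "card {g \<in> shift_group. g ` unital_U n k = (unital_U n k :: 'a pt set)} = 3^(2*n)"
proof -
  have "{g \<in> shift_group. g ` unital_U n k = (unital_U n k :: 'a pt set)} = (\<lambda>(u,v). shift u v) ` {(u,v). shift u v ` unital_U n k = (unital_U n k :: 'a pt set)}"
    by (rule sg_eq)
  also have "{(u,v). shift u v ` unital_U n k = (unital_U n k :: 'a pt set)} = K \<times> K"
    by (auto simp: stabU K_def)
  finally have "card {g \<in> shift_group. g ` unital_U n k = (unital_U n k :: 'a pt set)} = card ((\<lambda>(u,v). shift u v) ` (K \<times> K))"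
    by simp
  also have "\<dots> = card (K \<times> K)" by (rule card_image[OF shift_inj])
  also have "\<dots> = q * q" using card_SK by (simp add: card_cartesian_product)
  finally show ?thesis by (simp add: power_add[symmetric] mult_2)
qed

lemma part2: "card {g \<in> shift_group. g ` unital_Utheta n \<theta> = unital_Utheta n \<theta>} = 3^(3*n)"
proof -
  have "{g \<in> shift_group. g ` unital_Utheta n \<theta> = unital_Utheta n \<theta>} = (\<lambda>(u,v). shift u v) ` {(u,v). shift u v ` unital_Utheta n \<theta> = unital_Utheta n \<theta>}"
    by (rule sg_eq)
  also have "{(u,v). shift u v ` unital_Utheta n \<theta> = unital_Utheta n \<theta>} = ((UNIV::'a set) \<times> ((\<lambda>t. t*\<theta>) ` S))"
    by (auto simp: stabUt S_def)
  finally have "card {g \<in> shift_group. g ` unital_Utheta n \<theta> = unital_Utheta n \<theta>} = card ((\<lambda>(u,v). shift u v) ` ((UNIV::'a set) \<times> ((\<lambda>t. t*\<theta>) ` S)))"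
    by simp
  also have "\<dots> = card ((UNIV::'a set) \<times> ((\<lambda>t. t*\<theta>) ` S))" using shift_inj[of "(UNIV::'a set) \<times> ((\<lambda>t. t*\<theta>) ` S)"] by (rule card_image)
  also have "\<dots> = card (UNIV::'a set) * card ((\<lambda>t. t*\<theta>) ` S)" by (simp add: card_cartesian_product)
  also have "card ((\<lambda>t. t*\<theta>) ` S) = card S" by (rule card_image) (use th0 in \<open>auto intro: inj_onI\<close>)
  also have "card (UNIV::'a set) * card S = 3^(2*n) * 3^n" using cardU card_SK by simp
  finally show ?thesis by (simp add: power_add[symmetric])
qed

end



lemma lp_simps:
  "Aff x y \<in> line_pts f (L a b) \<longleftrightarrow> y = f (x+a) - b"
  "Inf c \<in> line_pts f (L a b) \<longleftrightarrow> c = Some a"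
  "Aff x y \<in> line_pts f (N a) \<longleftrightarrow> x = a"
  "Inf c \<in> line_pts f (N a) \<longleftrightarrow> c = None"
  "Aff x y \<notin> line_pts f Linf"
  "Inf c \<in> line_pts f Linf"
  by auto

lemma lp_inj:
  fixes f :: "'a::field \<Rightarrow> 'a"
  assumes "line_pts f l1 = line_pts f l2" shows "l1 = l2"
proof (cases l1)
  case (L a b)
  have "Inf (Some a) \<in> line_pts f l1" "Aff 0 (f a - b) \<in> line_pts f l1" using L by simp_all
  hence "Inf (Some a) \<in> line_pts f l2" "Aff 0 (f a - b) \<in> line_pts f l2" using assms by simp_all
  then show ?thesis using L by (cases l2) auto
next
  case (N a)
  have "Inf None \<in> line_pts f l1" "Aff a 0 \<in> line_pts f l1" using N by simp_all
  hence "Inf None \<in> line_pts f l2" "Aff a 0 \<in> line_pts f l2" using assms by simp_all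
  then show ?thesis using N by (cases l2) auto
next
  case Linf
  have "Inf None \<in> line_pts f l1" "Inf (Some 0) \<in> line_pts f l1" using Linf by simp_all
  hence "Inf None \<in> line_pts f l2" "Inf (Some 0) \<in> line_pts f l2" using assms by simp_all
  then show ?thesis using Linf by (cases l2) auto
qed

lemma finite_ln: "finite (UNIV :: 'a::finite ln set)"
proof -
  have "(UNIV :: 'a ln set) \<subseteq> (\<lambda>(a,b). L a b) ` UNIV \<union> range N \<union> {Linf}"
  proof
    fix l :: "'a ln" show "l \<in> (\<lambda>(a,b). L a b) ` UNIV \<union> range N \<union> {Linf}"
      by (cases l) auto
  qed
  moreover have "finite ((\<lambda>(a,b). L a b) ` (UNIV::('a\<times>'a) set) \<union> range N \<union> {Linf})" by simp
  ultimately show ?thesis by (rule finite_subset)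
qed

lemma lines_surj:
  fixes f :: "'a::{field,finite} \<Rightarrow> 'a"
  assumes col: "collineation f g"
  shows "\<exists>l. g ` line_pts f l = line_pts f l'"
proof -
  have ex: "\<forall>l. \<exists>l'. g ` line_pts f l = line_pts f l'" and bg: "bij g"
    using col by (auto simp: collineation_def)
  define G where "G l = (SOME l'. g ` line_pts f l = line_pts f l')" for l
  have G: "g ` line_pts f l = line_pts f (G l)" for l
    unfolding G_def using ex by (metis (mono_tags, lifting) someI_ex)
  have "inj G"
  proof (rule injI)
    fix l1 l2 assume "G l1 = G l2"
    hence "g ` line_pts f l1 = g ` line_pts f l2" using G by simp
    hence "line_pts f l1 = line_pts f l2" using bg by (simp add: bij_def inj_image_eq_iff)
    thus "l1 = l2" by (rule lp_inj)
  qed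
  hence "surj G" using finite_UNIV_inj_surj[OF finite_ln] by blast
  then obtain l where "l' = G l" by (metis surjD)
  thus ?thesis using G by blast
qed

context cmset begin

definition polar :: "'a pt \<Rightarrow> 'a ln" where
  "polar P = (case P of Aff x y \<Rightarrow> L (x^q) (y^q) | Inf None \<Rightarrow> Linf | Inf (Some a) \<Rightarrow> N (a^q))"

lemma polar_simps: "polar (Aff x y) = L (x^q) (y^q)" "polar (Inf None) = Linf" "polar (Inf (Some a)) = N (a^q)"
  by (simp_all add: polar_def)

lemma polar_sym: assumes "P \<in> line_pts f (polar Q)" shows "Q \<in> line_pts f (polar P)"
proof (cases P)
  case (Aff x y) note P = this
  show ?thesis
  proof (cases Q)
    case (Aff a b)
    have "y = f (x + a^q) - b^q" using assms P Aff by (simp add: polar_simps)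
    hence "y^q = (f (x + a^q))^q - b" by (simp add: fdiff fq)
    also have "(f (x + a^q))^q = f (a + x^q)" by (simp add: f_frob[symmetric] fadd fq add.commute)
    finally show ?thesis using P Aff by (simp add: polar_simps)
  next
    case (Inf c) then show ?thesis using assms P by (cases c) (auto simp: polar_simps fq)
  qed
next
  case (Inf c) note P = this
  show ?thesis
  proof (cases Q)
    case (Aff a b) then show ?thesis using assms P by (cases c) (auto simp: polar_simps fq)
  next
    case (Inf d) then show ?thesis using assms P by (cases c; cases d) (auto simp: polar_simps)
  qed
qed

lemma three_eq: "(x::'a) + x + x = 0"
proof -
  have "x + x + x = 3 * x" by simp
  thus ?thesis using t3 by simp
qed

lemma tangent_unique:
  assumes QU: "Q \<in> unital_U n k" and Ql: "Q \<in> line_pts f l"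
    and uniq: "\<And>R. R \<in> line_pts f l \<Longrightarrow> R \<in> unital_U n k \<Longrightarrow> R = Q"
  shows "l = polar Q"
proof (cases Q)
  case (Inf c)
  with QU have c: "c = None" by (simp add: memU_Inf)
  show ?thesis
  proof (cases l)
    case (L a b) with Ql Inf c show ?thesis by simp
  next
    case (N a)
    define w where "w = f (Tr a)"
    have wq: "w^q = w" by (simp add: w_def f_frob[symmetric] Tr_q)
    have "Tr (-w) = w" unfolding Tr_def using wq three_eq[of w]
      by (simp add: fneg)
    hence "Aff a (-w) \<in> unital_U n k" by (simp add: memU_Aff w_def)
    moreover have "Aff a (-w) \<in> line_pts f l" using N by simp
    ultimately have "Aff a (-w) = Q" using uniq by blast
    with Inf show ?thesis by simp
  next
    case Linf then show ?thesis by (simp add: Inf c polar_simps)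
  qed
next
  case (Aff x0 y0)
  with QU have QU': "Tr y0 = f (Tr x0)" by (simp add: memU_Aff)
  show ?thesis
  proof (cases l)
    case Linf with Ql Aff show ?thesis by auto
  next
    case (N a)
    with Ql Aff have a: "a = x0" by simp
    define w where "w = \<theta> - \<theta>^q"
    have w0: "w \<noteq> 0" using th_notS by (simp add: w_def)
    have Tw: "Tr w = 0" by (simp add: w_def Tr_def fdiff fq)
    have "Aff x0 (y0 + w) \<in> unital_U n k" using QU' by (simp add: memU_Aff Tr_add Tw)
    moreover have "Aff x0 (y0 + w) \<in> line_pts f l" using N a by simp
    ultimately have "Aff x0 (y0 + w) = Q" using uniq by blast
    with Aff w0 show ?thesis by simp
  next
    case (L a b)
    with Ql Aff have yb: "y0 = f (x0 + a) - b" by simp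
    have Trb: "Tr b = Tr (f (x0+a)) - f (Tr x0)"
    proof -
      have "b = f (x0+a) - y0" using yb by simp
      hence "Tr b = Tr (f (x0+a)) - Tr y0" by (simp add: Tr_diff)
      thus ?thesis using QU' by simp
    qed
    show ?thesis
    proof (cases "a = x0^q")
      case True
      have "b = f (Tr x0) - y0" using yb True by (simp add: Tr_def)
      also have "\<dots> = y0^q" by (metis QU' Tr_def add_diff_cancel_left')
      finally show ?thesis using L True Aff by (simp add: polar_simps)
    next
      case False
      obtain x1 where x1ne: "x1 \<noteq> x0" and x1U: "Tr (f (x1+a) - b) = f (Tr x1)"
      proof (cases "(x0+a)^q = x0+a")
        case False
        define x1 where "x1 = x0^q + a^q - a"
        have xa: "x1 + a = (x0+a)^q" by (simp add: x1_def fadd)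
        have "Tr (f (x1+a)) = f ((x0+a)^q) + (f ((x0+a)^q))^q" by (simp only: Tr_def xa)
        also have "\<dots> = (f (x0+a))^q + f (x0+a)" by (simp only: f_frob fq)
        also have "\<dots> = Tr (f (x0+a))" by (simp add: Tr_def add.commute)
        finally have TF: "Tr (f (x1+a)) = Tr (f (x0+a))" .
        have "x1^q = x0 + a - a^q" by (simp add: x1_def fadd fdiff fq)
        hence Tx: "Tr x1 = Tr x0" by (simp add: Tr_def x1_def)
        have "Tr (f (x1+a) - b) = f (Tr x1)" by (simp add: Tr_diff TF Trb Tx)
        moreover have "x1 \<noteq> x0"
        proof
          assume "x1 = x0" hence "(x0+a)^q = x0 + a" using xa by simp
          with False show False by simp
        qed
        ultimately show ?thesis using that by blast
      next
        case True
        define s where "s = Tr x0"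
        define x1 where "x1 = s - a"
        have sq: "s^q = s" by (simp add: s_def Tr_q)
        have aq: "a^q = x0 + a - x0^q" using True by (simp add: fadd algebra_simps)
        have Tx1: "Tr x1 = x0 + a"
        proof (rule eq3I[OF t3, where z = "x0^q - a"])
          show "Tr x1 - (x0 + a) = 3 * (x0^q - a)"
            by (simp add: Tr_def x1_def fdiff sq aq) (simp add: s_def Tr_def algebra_simps)
        qed
        have fc: "(f (x0+a))^q = f (x0+a)" using True by (simp add: f_frob[symmetric])
        have fs: "(f s)^q = f s" using sq by (simp add: f_frob[symmetric])
        have "Tr (f (x1+a) - b) = f (x0 + a)"
        proof (rule eq3I[OF t3, where z = "f s - f (x0+a)"])
          have TFs: "Tr (f s) = f s + f s" using fs by (simp add: Tr_def)
          have TFc: "Tr (f (x0+a)) = f (x0+a) + f (x0+a)" using fc by (simp add: Tr_def)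
          have "Tr (f (x1+a) - b) = Tr (f s) - Tr b" by (simp add: x1_def Tr_diff)
          also have "\<dots> = (f s + f s) - ((f (x0+a) + f (x0+a)) - f s)" by (simp only: TFs Trb TFc s_def[symmetric])
          finally show "Tr (f (x1+a) - b) - f (x0 + a) = 3 * (f s - f (x0+a))"
            by (simp add: algebra_simps)
        qed
        hence "Tr (f (x1+a) - b) = f (Tr x1)" using Tx1 by simp
        moreover have "x1 \<noteq> x0"
        proof
          assume "x1 = x0" hence "a = x0^q" by (simp add: x1_def s_def Tr_def)
          with \<open>a \<noteq> x0^q\<close> show False by simp
        qed
        ultimately show ?thesis using that by blast
      qed
      have "Aff x1 (f (x1+a) - b) \<in> unital_U n k" using x1U by (simp add: memU_Aff)
      moreover have "Aff x1 (f (x1+a) - b) \<in> line_pts f l" using L by simp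
      ultimately have "Aff x1 (f (x1+a) - b) = Q" using uniq by blast
      with Aff x1ne show ?thesis by simp
    qed
  qed
qed

lemma foot_on_polar:
  assumes "Q \<in> unital_U n k" "Q \<in> line_pts f l" "P \<in> line_pts f l"
    and "\<And>R. R \<in> line_pts f l \<Longrightarrow> R \<in> unital_U n k \<Longrightarrow> R = Q"
  shows "Q \<in> line_pts f (polar P)"
proof -
  have "l = polar Q" using tangent_unique assms by blast
  thus ?thesis using assms(3) polar_sym by simp
qed

end



lemma img_pre: "inj g \<Longrightarrow> g Q = y \<Longrightarrow> y \<in> g ` A \<Longrightarrow> Q \<in> A"
  by (auto simp: inj_eq)

context cmset begin

lemma tangent_Ut:
  assumes t0: "f a - r = t0*\<theta>" "t0^q = t0"
  shows "Aff 0 r \<in> line_pts f (L a (f a - r))"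
    and "Aff (-a) (r - f a) \<in> line_pts f (L a (f a - r))"
    and "Aff (-a) (r - f a) \<in> unital_Utheta n \<theta>"
    and "\<And>R. R \<in> line_pts f (L a (f a - r)) \<Longrightarrow> R \<in> unital_Utheta n \<theta> \<Longrightarrow> R = Aff (-a) (r - f a)"
proof -
  show "Aff 0 r \<in> line_pts f (L a (f a - r))" by simp
  show "Aff (-a) (r - f a) \<in> line_pts f (L a (f a - r))" by (simp add: f0)
  have "r - f a = (-t0)*\<theta>" "(-t0)^q = -t0" using t0 by (simp_all add: fneg algebra_simps)
  thus "Aff (-a) (r - f a) \<in> unital_Utheta n \<theta>" by (simp only: memUt_Aff) blast
  fix R assume Rl: "R \<in> line_pts f (L a (f a - r))" and RU: "R \<in> unital_Utheta n \<theta>"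
  show "R = Aff (-a) (r - f a)"
  proof (cases R)
    case (Inf c) with Rl RU show ?thesis by (simp add: memUt_Inf)
  next
    case (Aff x y)
    with Rl have y: "y = f (x+a) - (f a - r)" by simp
    from Aff RU obtain t where t: "t^q = t" "y = t*\<theta>" by (auto simp: memUt_Aff)
    have "f (x+a) = (t+t0)*\<theta>" using y t t0 by (simp add: algebra_simps)
    moreover have "(t+t0)^q = t+t0" using t t0 by (simp add: fadd)
    ultimately have "x + a = 0" by (rule f_notin)
    hence x: "x = -a" by (simp add: eq_neg_iff_add_eq_0)
    thus ?thesis using Aff y by (simp add: f0)
  qed
qed

lemma th_ne1: "\<theta> \<noteq> 1" using th_notS by auto

lemma four_eq: "(4::'a) = 1"
proof -
  have "(4::'a) = 3 + 1" by simp
  thus ?thesis using t3 by simp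
qed

lemma part3: "\<not> (\<exists>g. collineation f g \<and> g ` unital_U n k = unital_Utheta n \<theta>)"
proof
  assume "\<exists>g. collineation f g \<and> g ` unital_U n k = unital_Utheta n \<theta>"
  then obtain g where col: "collineation f g" and gU: "g ` unital_U n k = unital_Utheta n \<theta>" by blast
  have bg: "bij g" using col by (simp add: collineation_def)
  hence ig: "inj g" and sg: "surj g" by (simp_all add: bij_def)
  obtain a1 where a1: "a1^e = \<theta> - 1" using pe_surj by blast
  obtain a2 where a2: "a2^e = \<theta> + 1" using pe_surj by blast
  define r where "r = (\<theta> - 1)^2"
  have fa1: "f a1 = r" by (simp only: f_sq a1 r_def)
  have fa2: "f a2 = (\<theta>+1)^2" by (simp only: f_sq a2)
  have a1ne: "a1 \<noteq> 0"
  proof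
    assume "a1 = 0" hence "\<theta> - 1 = 0" using a1 e_pos by (simp add: zero_power)
    with th_ne1 show False by simp
  qed
  have tan1: "f a - r = 0 * \<theta>" if "a = a1 \<or> a = -a1" for a
    using that fa1 f_neg by auto
  have tan2: "f a - r = 1 * \<theta>" if "a = a2 \<or> a = -a2" for a
  proof -
    have "f a = (\<theta>+1)^2" using that fa2 f_neg by auto
    hence "f a - r - \<theta> = 3 * \<theta>" by (simp add: r_def power2_eq_square algebra_simps)
    hence "f a - r = \<theta>" using t3 by simp
    thus ?thesis by simp
  qed
  define P' where "P' = inv_into UNIV g (Aff 0 r)"
  have gP': "g P' = Aff 0 r" using sg by (simp add: P'_def surj_f_inv_f)
  define Ft where "Ft a = Aff (-a) (r - f a)" for a
  have key: "inv_into UNIV g (Ft a) \<in> line_pts f (polar P')" if t0: "f a - r = t0*\<theta>" "t0^q = t0" for a t0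
  proof -
    obtain l where l: "g ` line_pts f l = line_pts f (L a (f a - r))" using lines_surj[OF col] by blast
    define Q where "Q = inv_into UNIV g (Ft a)"
    have gQ: "g Q = Ft a" using sg by (simp add: Q_def surj_f_inv_f)
    have "Ft a \<in> g ` line_pts f l" using l tangent_Ut(2)[OF t0] by (simp add: Ft_def)
    hence Ql: "Q \<in> line_pts f l" using img_pre[OF ig gQ] by blast
    have "Aff 0 r \<in> g ` line_pts f l" using l tangent_Ut(1)[OF t0] by simp
    hence Pl: "P' \<in> line_pts f l" using img_pre[OF ig gP'] by blast
    have "Ft a \<in> g ` unital_U n k" using gU tangent_Ut(3)[OF t0] by (simp add: Ft_def)
    hence QU: "Q \<in> unital_U n k" using img_pre[OF ig gQ] by blast
    have uniq: "R = Q" if "R \<in> line_pts f l" "R \<in> unital_U n k" for R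
    proof -
      have "g R \<in> line_pts f (L a (f a - r))" using l that(1) by blast
      moreover have "g R \<in> unital_Utheta n \<theta>" using gU that(2) by blast
      ultimately have "g R = Ft a" using tangent_Ut(4)[OF t0] by (simp add: Ft_def)
      hence "g R = g Q" using gQ by simp
      thus "R = Q" using injD[OF ig] by blast
    qed
    show ?thesis using foot_on_polar[OF QU Ql Pl uniq] by (simp add: Q_def)
  qed
  have "\<forall>l. \<exists>l'. g ` line_pts f l = line_pts f l'" using col by (simp add: collineation_def)
  then obtain m where m: "g ` line_pts f (polar P') = line_pts f m" by blast
  have onm: "Ft a \<in> line_pts f m" if "f a - r = t0*\<theta>" "t0^q = t0" for a t0
  proof -
    have "g (inv_into UNIV g (Ft a)) \<in> line_pts f m" using key[OF that] m by blast
    thus ?thesis using sg by (simp add: surj_f_inv_f)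
  qed
  have z0: "(0::'a)^q = 0" using q_gt1 by simp
  have o1: "(1::'a)^q = 1" by simp
  have m1: "Ft a1 \<in> line_pts f m" using onm[OF tan1 z0] by simp
  have m2: "Ft (-a1) \<in> line_pts f m" using onm[OF tan1 z0] by simp
  have m3: "Ft a2 \<in> line_pts f m" using onm[OF tan2 o1] by simp
  have m4: "Ft (-a2) \<in> line_pts f m" using onm[OF tan2 o1] by simp
  show False
  proof (cases m)
    case Linf with m1 show False by (auto simp: Ft_def)
  next
    case (N c)
    have c1: "-a1 = c" using m1 N by (simp add: Ft_def)
    have c2: "a1 = c" using m2 N by (simp add: Ft_def)
    have "a1 + a1 = 0" using c1 c2 by simp
    hence "2 * a1 = 0" by (simp only: mult_2)
    with a1ne t2 show False by simp
  next
    case (L \<alpha> \<beta>)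
    from m1 L have e1: "r - f a1 = f (-a1 + \<alpha>) - \<beta>" by (simp add: Ft_def)
    from m2 L have e2: "r - f a1 = f (a1 + \<alpha>) - \<beta>" by (simp add: Ft_def f_neg)
    from m3 L have e3: "r - f a2 = f (-a2 + \<alpha>) - \<beta>" by (simp add: Ft_def)
    from m4 L have e4: "r - f a2 = f (a2 + \<alpha>) - \<beta>" by (simp add: Ft_def f_neg)
    have "f (-a1 + \<alpha>) = f (a1 + \<alpha>)" using e1 e2 by simp
    hence "-a1 + \<alpha> = a1 + \<alpha> \<or> -a1 + \<alpha> = -(a1 + \<alpha>)" by (rule f_pm)
    hence "\<alpha> = 0"
    proof
      assume "-a1 + \<alpha> = a1 + \<alpha>"
      hence "2 * a1 = 0" by simp
      with a1ne t2 show ?thesis by simp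
    next
      assume "-a1 + \<alpha> = -(a1 + \<alpha>)"
      hence "2 * \<alpha> = 0" by (simp add: algebra_simps)
      with t2 show ?thesis by simp
    qed
    hence q1: "r - f a1 = f a1 - \<beta>" and q2: "r - f a2 = f a2 - \<beta>" using e1 e3 f_neg by simp_all
    have "2 * (f a2 - f a1) = ((f a2 - \<beta>) - (r - f a2)) - ((f a1 - \<beta>) - (r - f a1))" by (simp add: algebra_simps)
    also have "\<dots> = 0" by (simp only: q1 q2) simp
    finally have "2 * (f a2 - f a1) = 0" .
    hence "f a2 = f a1" using t2 by simp
    hence "(\<theta>+1)^2 - (\<theta>-1)^2 = 0" using fa1 fa2 r_def by simp
    hence "4 * \<theta> = 0" by (simp add: power2_eq_square algebra_simps)
    with four_eq th0 show False by simp
  qed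
qed

end

theorem theorem4p6:
  fixes n k :: nat and \<theta> :: "'a::{field,finite}"
  assumes "n > 0"
    and "card (UNIV :: 'a set) = 3 ^ (2 * n)"
    and "gcd k (2 * n) = 1"
    and "\<theta> \<noteq> 0"
    and "\<not> (\<exists>s::'a. s ^ (3 ^ n) = s \<and> s ^ 2 = \<theta> ^ (3 ^ n + 1))"
  shows "card {g \<in> shift_group. g ` unital_U n k = (unital_U n k :: 'a pt set)} = 3 ^ (2 * n) \<and>
     card {g \<in> shift_group. g ` unital_Utheta n \<theta> = unital_Utheta n \<theta>} = 3 ^ (3 * n) \<and>
     \<not> (\<exists>g. collineation (cm_fun k) g \<and> g ` unital_U n k = unital_Utheta n \<theta>)"
proof -
  have c3: "CHAR('a) = 3" using char3_from_card[OF assms(2)] assms(1) by simp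
  have fx: "\<And>x::'a. x^(3^(2*n)) = x" using pow_card_same assms(2) by metis
  interpret cmset n k \<theta>
  proof
    show "CHAR('a) = 3" by (rule c3)
    show "\<And>x::'a. x^(3^(2*n)) = x" by (rule fx)
    show "card (UNIV::'a set) = 3^(2*n)" by (rule assms(2))
    show "n > 0" by (rule assms(1))
    show "odd k" by (rule k_odd[OF assms(3) assms(1)])
    show "gcd k n = 1" by (rule coprime_kn[OF assms(3)])
    show "\<theta> \<noteq> 0" by (rule assms(4))
    show "\<not> (\<exists>s::'a. s^(3^n) = s \<and> s^2 = \<theta>^(3^n+1))" by (rule assms(5))
  qed
  show ?thesis using part1 part2 part3 by blast
qed



end
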